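(* Let $X$ be a real Banach space and $Y$ a uniformly convex real Banach space. Let $f\in\mathrm{Lip}_0(X,Y)$ and let $T_f\colon\mathcal F(X)\to Y$ be its linearization. If $T_f$ attains its norm (i.e., $\|T_f(w)\|=\|T_f\|$ for some $w$ in the unit sphere of $\mathcal F(X)$), then $f\in\mathrm{A}(X,Y)$.
   Context: $\widetilde X=\{(x,y)\in X^2:x\neq y\}$. $\mathrm{Lip}_0(X,Y)$ is the Banach space of Lipschitz $f\colon X\to Y$ with $f(0)=0$ and norm $\|f\|=\sup_{(x,y)\in\widetilde X}\|f(x)-f(y)\|/\|x-y\|$. The Lipschitz-free space $\mathcal F(X)$ is the closed linear span of $\{\delta_x:x\in X\}$ in $\mathrm{Lip}_0(X,\mathbb R)^*$, where $\delta_x(g)=g(x)$. For $f\in\mathrm{Lip}_0(X,Y)$, $T_f$ is the unique bounded linear operator $\mathcal F(X)\to Y$ with $T_f(\delta_x)=f(x)$ for all $x$; it satisfies $\|T_f\|=\|f\|$. $\mathrm{A}(X,Y)$ is the set of $f\in\mathrm{Lip}_0(X,Y)$ for which there exist $z\in Y$ with $\|z\|=\|f\|$ and $(x_n,y_n)\in\widetilde X$ with $\frac{f(x_n)-f(y_n)}{\|x_n-y_n\|}\to z$. *)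

theory Defs
  imports "HOL-Analysis.Analysis"
begin

definition Lip0 :: "('a::real_normed_vector \<Rightarrow> 'b::real_normed_vector) set" where
  "Lip0 = {f. f 0 = 0 \<and> (\<exists>C. C-lipschitz_on UNIV f)}"

definition lipnorm :: "('a::real_normed_vector \<Rightarrow> 'b::real_normed_vector) \<Rightarrow> real" where
  "lipnorm f = Sup {norm (f x - f y) / norm (x - y) | x y. x \<noteq> y}"

text \<open>Functionals on Lip0(X,R) are represented as functions on 'a => real that vanish
  outside Lip0 (so they are determined by their action on Lip0).\<close>

definition evalf :: "'a::real_normed_vector \<Rightarrow> ('a \<Rightarrow> real) \<Rightarrow> real" ("\<delta>") where
  "\<delta> x = (\<lambda>g. if g \<in> Lip0 then g x else 0)"

definition lip_dual :: "'a::real_normed_vector itself \<Rightarrow> (('a \<Rightarrow> real) \<Rightarrow> real) set" where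
  "lip_dual _ = {\<phi>. (\<forall>g. g \<notin> Lip0 \<longrightarrow> \<phi> g = 0)
      \<and> (\<forall>g\<in>Lip0. \<forall>h\<in>Lip0. \<phi> (\<lambda>x. g x + h x) = \<phi> g + \<phi> h)
      \<and> (\<forall>g\<in>Lip0. \<forall>c. \<phi> (\<lambda>x. c * g x) = c * \<phi> g)
      \<and> (\<exists>C. \<forall>g\<in>Lip0. \<bar>\<phi> g\<bar> \<le> C * lipnorm g)}"

definition dnorm :: "(('a::real_normed_vector \<Rightarrow> real) \<Rightarrow> real) \<Rightarrow> real" where
  "dnorm \<phi> = Sup {\<bar>\<phi> g\<bar> | g. g \<in> Lip0 \<and> lipnorm g \<le> 1}"

definition delta_span :: "'a::real_normed_vector itself \<Rightarrow> (('a \<Rightarrow> real) \<Rightarrow> real) set" where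
  "delta_span _ = {(\<lambda>g. \<Sum>x\<in>S. c x * \<delta> x g) | S c. finite S}"

definition free_space :: "'a::real_normed_vector itself \<Rightarrow> (('a \<Rightarrow> real) \<Rightarrow> real) set" where
  "free_space A = {\<phi> \<in> lip_dual A. \<forall>e>0. \<exists>\<psi>\<in>delta_span A. dnorm (\<lambda>g. \<phi> g - \<psi> g) < e}"

definition is_linearization ::
  "('a::real_normed_vector \<Rightarrow> 'b::real_normed_vector) \<Rightarrow> ((('a \<Rightarrow> real) \<Rightarrow> real) \<Rightarrow> 'b) \<Rightarrow> bool" where
  "is_linearization f T \<longleftrightarrow>
     (\<forall>\<phi>\<in>free_space TYPE('a). \<forall>\<psi>\<in>free_space TYPE('a). T (\<lambda>g. \<phi> g + \<psi> g) = T \<phi> + T \<psi>)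
   \<and> (\<forall>\<phi>\<in>free_space TYPE('a). \<forall>c. T (\<lambda>g. c * \<phi> g) = c *\<^sub>R T \<phi>)
   \<and> (\<exists>C. \<forall>\<phi>\<in>free_space TYPE('a). norm (T \<phi>) \<le> C * dnorm \<phi>)
   \<and> (\<forall>x. T (\<delta> x) = f x)"

definition opnorm_free :: "((('a::real_normed_vector \<Rightarrow> real) \<Rightarrow> real) \<Rightarrow> 'b::real_normed_vector) \<Rightarrow> real" where
  "opnorm_free T = Sup {norm (T \<phi>) | \<phi>. \<phi> \<in> free_space TYPE('a) \<and> dnorm \<phi> \<le> 1}"

definition attains_norm_free :: "((('a::real_normed_vector \<Rightarrow> real) \<Rightarrow> real) \<Rightarrow> 'b::real_normed_vector) \<Rightarrow> bool" where
  "attains_norm_free T \<longleftrightarrow> (\<exists>w\<in>free_space TYPE('a). dnorm w = 1 \<and> norm (T w) = opnorm_free T)"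

definition uniformly_convex :: "'b::real_normed_vector itself \<Rightarrow> bool" where
  "uniformly_convex _ \<longleftrightarrow> (\<forall>e>0. \<exists>d>0. \<forall>x y::'b. norm x = 1 \<and> norm y = 1 \<and> norm (x - y) \<ge> e
       \<longrightarrow> norm ((1/2) *\<^sub>R (x + y)) \<le> 1 - d)"

definition classA :: "('a::real_normed_vector \<Rightarrow> 'b::real_normed_vector) set" where
  "classA = {f \<in> Lip0. \<exists>z xs ys. norm z = lipnorm f \<and> (\<forall>n. xs n \<noteq> ys n)
      \<and> (\<lambda>n. (1 / norm (xs n - ys n)) *\<^sub>R (f (xs n) - f (ys n))) \<longlonglongrightarrow> z}"

end

theory Submission imports Defs begin

definition lin_on :: "'b::real_normed_vector set \<Rightarrow> ('b \<Rightarrow> real) \<Rightarrow> bool" where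
  "lin_on V \<phi> \<longleftrightarrow> (\<forall>a\<in>V. \<forall>b\<in>V. \<phi> (a + b) = \<phi> a + \<phi> b) \<and> (\<forall>a\<in>V. \<forall>r. \<phi> (r *\<^sub>R a) = r * \<phi> a)"

lemma hb_step:
  fixes u :: "'b::real_normed_vector"
  assumes u: "u \<notin> span B" and lin: "lin_on (span B) \<phi>"
    and c1: "\<And>w. w \<in> span B \<Longrightarrow> \<phi> w - norm (w - u) \<le> c"
    and c2: "\<And>w. w \<in> span B \<Longrightarrow> c \<le> norm (w + u) - \<phi> w"
    and dom: "\<And>a. a \<in> span B \<Longrightarrow> \<phi> a \<le> norm a"
  shows "\<exists>\<phi>'. lin_on (span (insert u B)) \<phi>' \<and> (\<forall>a\<in>span (insert u B). \<phi>' a \<le> norm a)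
     \<and> (\<forall>a\<in>span B. \<phi>' a = \<phi> a) \<and> \<phi>' u = c"
proof -
  have ex: "\<exists>k. x - k *\<^sub>R u \<in> span B" if "x \<in> span (insert u B)" for x
    using that span_breakdown_eq by blast
  have uniq: "k = k'" if "x - k *\<^sub>R u \<in> span B" "x - k' *\<^sub>R u \<in> span B" for x k k'
  proof (rule ccontr)
    assume "k \<noteq> k'"
    have "(x - k' *\<^sub>R u) - (x - k *\<^sub>R u) \<in> span B" using that span_diff by blast
    hence "(k - k') *\<^sub>R u \<in> span B" by (simp add: algebra_simps)
    hence "(1/(k - k')) *\<^sub>R ((k - k') *\<^sub>R u) \<in> span B" using span_scale by blast
    with \<open>k \<noteq> k'\<close> have "u \<in> span B" by simp
    with u show False by simp
  qed
  define K where "K x = (THE k. x - k *\<^sub>R u \<in> span B)" for x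
  have K: "x - K x *\<^sub>R u \<in> span B" if "x \<in> span (insert u B)" for x
    unfolding K_def using ex[OF that] uniq by (metis theI)
  have Keq: "K x = k" if "x \<in> span (insert u B)" "x - k *\<^sub>R u \<in> span B" for x k
    using uniq K that by blast
  define \<phi>' where "\<phi>' x = \<phi> (x - K x *\<^sub>R u) + K x * c" for x
  have ladd: "\<phi> (a + b) = \<phi> a + \<phi> b" if "a \<in> span B" "b \<in> span B" for a b
    using lin that unfolding lin_on_def by blast
  have lsc: "\<phi> (r *\<^sub>R a) = r * \<phi> a" if "a \<in> span B" for a r
    using lin that unfolding lin_on_def by blast
  have lin': "lin_on (span (insert u B)) \<phi>'"
    unfolding lin_on_def
  proof (intro conjI ballI allI)
    fix a b assume a: "a \<in> span (insert u B)" and b: "b \<in> span (insert u B)"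
    have ab: "a + b \<in> span (insert u B)" using a b span_add by blast
    have "(a + b) - (K a + K b) *\<^sub>R u = (a - K a *\<^sub>R u) + (b - K b *\<^sub>R u)"
      by (simp add: algebra_simps)
    hence "(a + b) - (K a + K b) *\<^sub>R u \<in> span B" using K[OF a] K[OF b] span_add by metis
    hence "K (a + b) = K a + K b" using Keq[OF ab] by blast
    then show "\<phi>' (a + b) = \<phi>' a + \<phi>' b" unfolding \<phi>'_def
      using ladd[OF K[OF a] K[OF b]] \<open>(a + b) - (K a + K b) *\<^sub>R u = _\<close>
      by (simp add: algebra_simps)
  next
    fix a r assume a: "a \<in> span (insert u B)"
    have ar: "r *\<^sub>R a \<in> span (insert u B)" using a span_scale by blast
    have e: "r *\<^sub>R a - (r * K a) *\<^sub>R u = r *\<^sub>R (a - K a *\<^sub>R u)" by (simp add: algebra_simps)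
    hence "r *\<^sub>R a - (r * K a) *\<^sub>R u \<in> span B" using K[OF a] span_scale by metis
    hence "K (r *\<^sub>R a) = r * K a" using Keq[OF ar] by blast
    then show "\<phi>' (r *\<^sub>R a) = r * \<phi>' a" unfolding \<phi>'_def
      using lsc[OF K[OF a]] e by (simp add: algebra_simps)
  qed
  have dom': "\<phi>' a \<le> norm a" if a: "a \<in> span (insert u B)" for a
  proof -
    define w where "w = a - K a *\<^sub>R u"
    define k where "k = K a"
    have w: "w \<in> span B" using K[OF a] w_def by simp
    have aw: "a = w + k *\<^sub>R u" using w_def k_def by simp
    have "\<phi> w + k * c \<le> norm (w + k *\<^sub>R u)"
    proof (cases k "0::real" rule: linorder_cases)
      case less
      define s where "s = - k"
      have s: "s > 0" using less s_def by simp
      have ws: "(1/s) *\<^sub>R w \<in> span B" using w span_scale by blast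
      have "\<phi> ((1/s) *\<^sub>R w) - norm ((1/s) *\<^sub>R w - u) \<le> c" using c1[OF ws] .
      hence "(1/s) * \<phi> w - norm ((1/s) *\<^sub>R (w - s *\<^sub>R u)) \<le> c"
        using lsc[OF w] s by (simp add: algebra_simps)
      hence "(1/s) * \<phi> w - (1/s) * norm (w - s *\<^sub>R u) \<le> c" using s by simp
      hence "s * ((1/s) * \<phi> w - (1/s) * norm (w - s *\<^sub>R u)) \<le> s * c"
        using s by (simp add: mult_left_mono)
      hence "\<phi> w - norm (w - s *\<^sub>R u) \<le> s * c" using s by (simp add: algebra_simps)
      thus ?thesis using s_def by (simp add: algebra_simps)
    next
      case equal
      thus ?thesis using dom[OF w] by simp
    next
      case greater
      have ws: "(1/k) *\<^sub>R w \<in> span B" using w span_scale by blast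
      have "c \<le> norm ((1/k) *\<^sub>R w + u) - \<phi> ((1/k) *\<^sub>R w)" using c2[OF ws] .
      hence "c \<le> norm ((1/k) *\<^sub>R (w + k *\<^sub>R u)) - (1/k) * \<phi> w"
        using lsc[OF w] greater by (simp add: algebra_simps)
      hence "c \<le> (1/k) * norm (w + k *\<^sub>R u) - (1/k) * \<phi> w" using greater by simp
      hence "k * c \<le> k * ((1/k) * norm (w + k *\<^sub>R u) - (1/k) * \<phi> w)"
        using greater by (simp add: mult_left_mono)
      thus ?thesis using greater by (simp add: algebra_simps)
    qed
    moreover have "\<phi>' a = \<phi> w + k * c" unfolding \<phi>'_def w_def k_def by simp
    ultimately show ?thesis using aw by simp
  qed
  have agree: "\<phi>' a = \<phi> a" if a: "a \<in> span B" for a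
  proof -
    have a': "a \<in> span (insert u B)" using a span_mono[of B "insert u B"] by blast
    have "K a = 0" using Keq[OF a'] a by simp
    thus ?thesis unfolding \<phi>'_def by simp
  qed
  have "K u = 1" using Keq[of u 1] span_base[of u "insert u B"] span_zero[of B] by simp
  hence "\<phi>' u = c" unfolding \<phi>'_def using lsc[OF span_zero, of 0] by simp
  thus ?thesis using lin' dom' agree by blast
qed


lemma hb_ext:
  fixes u :: "'b::real_normed_vector"
  assumes lin: "lin_on (span B) \<phi>" and dom: "\<And>a. a \<in> span B \<Longrightarrow> \<phi> a \<le> norm a"
  shows "\<exists>\<phi>'. lin_on (span (insert u B)) \<phi>' \<and> (\<forall>a\<in>span (insert u B). \<phi>' a \<le> norm a)
     \<and> (\<forall>a\<in>span B. \<phi>' a = \<phi> a)"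
proof (cases "u \<in> span B")
  case True
  have e: "span (insert u B) = span B" using span_redundant[OF True] .
  show ?thesis by (rule exI[of _ \<phi>]) (simp add: e lin dom)
next
  case False
  have ladd: "\<phi> (a + b) = \<phi> a + \<phi> b" if "a \<in> span B" "b \<in> span B" for a b
    using lin that unfolding lin_on_def by blast
  have key: "\<phi> w1 - norm (w1 - u) \<le> norm (w2 + u) - \<phi> w2"
    if "w1 \<in> span B" "w2 \<in> span B" for w1 w2
  proof -
    have "\<phi> w1 + \<phi> w2 = \<phi> (w1 + w2)" using ladd that by simp
    also have "\<dots> \<le> norm (w1 + w2)" using dom span_add that by blast
    also have "\<dots> \<le> norm (w1 - u) + norm (w2 + u)"
      using norm_triangle_ineq[of "w1 - u" "w2 + u"] by simp
    finally show ?thesis by simp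
  qed
  define X where "X = {\<phi> w - norm (w - u) | w. w \<in> span B}"
  define c where "c = Sup X"
  have ne: "X \<noteq> {}" unfolding X_def using span_zero by blast
  have bdd: "bdd_above X" unfolding X_def bdd_above_def using key[OF _ span_zero] by blast
  have c1: "\<phi> w - norm (w - u) \<le> c" if "w \<in> span B" for w
    unfolding c_def using cSup_upper[OF _ bdd] that X_def by blast
  have c2: "c \<le> norm (w + u) - \<phi> w" if "w \<in> span B" for w
    unfolding c_def using cSup_least[OF ne] key[OF _ that] X_def by blast
  show ?thesis using hb_step[OF False lin c1 c2 dom] by blast
qed

lemma hb_fin:
  fixes y :: "'b::real_normed_vector"
  assumes "finite U"
  shows "\<exists>\<phi>. lin_on (span (insert y U)) \<phi> \<and> (\<forall>a\<in>span (insert y U). \<phi> a \<le> norm a) \<and> \<phi> y = norm y"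
  using assms
proof (induction U rule: finite_induct)
  case empty
  show ?case
  proof (cases "y = 0")
    case True
    then show ?thesis by (auto simp: lin_on_def)
  next
    case False
    have yn: "y \<notin> span {}" using False by simp
    have lin0: "lin_on (span {}) (\<lambda>_. 0)" by (simp add: lin_on_def)
    have c1: "\<And>w. w \<in> span {} \<Longrightarrow> (\<lambda>_. 0) w - norm (w - y) \<le> norm y" by simp
    have c2: "\<And>w. w \<in> span {} \<Longrightarrow> norm y \<le> norm (w + y) - (\<lambda>_. 0) w" by simp
    show ?thesis using hb_step[OF yn lin0 c1 c2] by auto
  qed
next
  case (insert u U)
  then obtain \<phi> where lin: "lin_on (span (insert y U)) \<phi>"
    and dom: "\<forall>a\<in>span (insert y U). \<phi> a \<le> norm a" and py: "\<phi> y = norm y" by blast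
  obtain \<phi>' where "lin_on (span (insert u (insert y U))) \<phi>'"
    "\<forall>a\<in>span (insert u (insert y U)). \<phi>' a \<le> norm a" "\<forall>a\<in>span (insert y U). \<phi>' a = \<phi> a"
    using hb_ext[OF lin] dom by blast
  moreover have "y \<in> span (insert y U)" by (simp add: span_base)
  ultimately show ?case using py by (metis insert_commute)
qed

lemma lin_on_zero: "lin_on (span S) \<phi> \<Longrightarrow> \<phi> 0 = 0"
  unfolding lin_on_def using span_zero by (metis scale_zero_left mult_zero_left)

lemma lin_on_neg: "lin_on (span S) \<phi> \<Longrightarrow> a \<in> span S \<Longrightarrow> \<phi> (- a) = - \<phi> a"
  unfolding lin_on_def by (metis scaleR_minus1_left mult_minus1)

lemma lin_on_diff: "lin_on (span S) \<phi> \<Longrightarrow> a \<in> span S \<Longrightarrow> b \<in> span S \<Longrightarrow> \<phi> (a - b) = \<phi> a - \<phi> b"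
proof -
  assume l: "lin_on (span S) \<phi>" and a: "a \<in> span S" and b: "b \<in> span S"
  have "- b \<in> span S" using span_neg[OF b] .
  hence "\<phi> (a + - b) = \<phi> a + \<phi> (- b)" using l a unfolding lin_on_def by blast
  thus ?thesis using lin_on_neg[OF l b] by simp
qed

lemma lin_on_add: "lin_on (span S) \<phi> \<Longrightarrow> a \<in> span S \<Longrightarrow> b \<in> span S \<Longrightarrow> \<phi> (a + b) = \<phi> a + \<phi> b"
  unfolding lin_on_def by blast

lemma lin_on_scale: "lin_on (span S) \<phi> \<Longrightarrow> a \<in> span S \<Longrightarrow> \<phi> (r *\<^sub>R a) = r * \<phi> a"
  unfolding lin_on_def by blast

lemma lin_on_sum:
  assumes "lin_on (span S) \<phi>" "finite A" "\<And>x. x \<in> A \<Longrightarrow> v x \<in> span S"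
  shows "\<phi> (\<Sum>x\<in>A. r x *\<^sub>R v x) = (\<Sum>x\<in>A. r x * \<phi> (v x))"
  using assms(2,3)
proof (induction A rule: finite_induct)
  case empty
  then show ?case using lin_on_zero[OF assms(1)] by simp
next
  case (insert a A)
  have s: "(\<Sum>x\<in>A. r x *\<^sub>R v x) \<in> span S" using insert.prems by (intro span_sum span_scale) auto
  have "\<phi> (r a *\<^sub>R v a + (\<Sum>x\<in>A. r x *\<^sub>R v x)) = \<phi> (r a *\<^sub>R v a) + \<phi> (\<Sum>x\<in>A. r x *\<^sub>R v x)"
  proof -
    have "v a \<in> span S" using insert.prems by simp
    hence "r a *\<^sub>R v a \<in> span S" by (rule span_scale)
    thus ?thesis using assms(1) s unfolding lin_on_def by blast
  qed
  also have "\<phi> (r a *\<^sub>R v a) = r a * \<phi> (v a)" using assms(1) insert.prems unfolding lin_on_def by blast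
  finally show ?case using insert by simp
qed


lemma Lip0_D: assumes "f \<in> Lip0" obtains C where "C-lipschitz_on UNIV f" "f 0 = 0"
  using assms unfolding Lip0_def by blast

lemma lip_bdd:
  assumes "f \<in> Lip0"
  shows "bdd_above {norm (f x - f y) / norm (x - y) | x y. x \<noteq> y}"
proof -
  obtain C where C: "C-lipschitz_on UNIV f" using assms Lip0_D by blast
  have "norm (f x - f y) / norm (x - y) \<le> C" if "x \<noteq> y" for x y
  proof -
    have "norm (f x - f y) \<le> C * norm (x - y)" using lipschitz_on_normD[OF C] by simp
    thus ?thesis using that by (simp add: divide_le_eq)
  qed
  thus ?thesis unfolding bdd_above_def by blast
qed

lemma lip_bound:
  assumes "f \<in> Lip0"
  shows "norm (f x - f y) \<le> lipnorm f * norm (x - y)"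
proof (cases "x = y")
  case True then show ?thesis by simp
next
  case False
  have "norm (f x - f y) / norm (x - y) \<le> lipnorm f"
    unfolding lipnorm_def using False by (intro cSup_upper[OF _ lip_bdd[OF assms]]) blast
  thus ?thesis using False by (simp add: divide_le_eq mult.commute)
qed

lemma lip_bound0:
  assumes "f \<in> Lip0"
  shows "norm (f x) \<le> lipnorm f * norm x"
  using lip_bound[OF assms, of x 0] assms unfolding Lip0_def by simp

lemma lipnorm_le:
  assumes "\<exists>a::'a. a \<noteq> 0" and "\<And>x y. x \<noteq> y \<Longrightarrow> norm (f x - f y) \<le> K * norm (x - y)"
  shows "lipnorm (f :: 'a::real_normed_vector \<Rightarrow> 'b::real_normed_vector) \<le> K"
  unfolding lipnorm_def
proof (rule cSup_least)
  obtain a :: 'a where "a \<noteq> 0" using assms by blast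
  thus "{norm (f x - f y) / norm (x - y) | x y. x \<noteq> y} \<noteq> {}" by blast
next
  fix r assume "r \<in> {norm (f x - f y) / norm (x - y) | x y. x \<noteq> y}"
  then obtain x y where "x \<noteq> y" "r = norm (f x - f y) / norm (x - y)" by blast
  thus "r \<le> K" using assms(2)[of x y] by (simp add: divide_le_eq mult.commute)
qed

lemma lipnorm_nonneg:
  assumes "\<exists>a::'a. a \<noteq> 0" "f \<in> Lip0"
  shows "0 \<le> lipnorm (f :: 'a::real_normed_vector \<Rightarrow> 'b::real_normed_vector)"
proof -
  obtain a :: 'a where a: "a \<noteq> 0" using assms by blast
  have "norm (f a - f 0) / norm (a - 0) \<le> lipnorm f"
    unfolding lipnorm_def using a by (intro cSup_upper[OF _ lip_bdd[OF assms(2)]]) blast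
  moreover have "0 \<le> norm (f a - f 0) / norm (a - 0)" by simp
  ultimately show ?thesis by linarith
qed

lemma Lip0_I:
  assumes "g 0 = 0" "\<And>x y. norm (g x - g y) \<le> K * norm (x - y)" "0 \<le> K"
  shows "g \<in> Lip0"
  unfolding Lip0_def using assms by (auto intro!: exI[of _ K] lipschitz_onI simp: dist_norm)

lemma Lip0_zero: "(\<lambda>x. 0) \<in> Lip0"
  by (rule Lip0_I[of _ 0]) auto

lemma Lip0_zero_real: "(\<lambda>x::'a::real_normed_vector. 0::real) \<in> Lip0"
  by (rule Lip0_zero)

lemma lipnorm_zero:
  assumes "\<exists>a::'a. a \<noteq> 0"
  shows "lipnorm (\<lambda>x::'a::real_normed_vector. 0::'b::real_normed_vector) = 0"
proof -
  have "lipnorm (\<lambda>x::'a. 0::'b) \<le> 0" using lipnorm_le[OF assms, of "\<lambda>x. 0::'b" 0] by simp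
  moreover have "0 \<le> lipnorm (\<lambda>x::'a. 0::'b)" using lipnorm_nonneg[OF assms, of "\<lambda>x. 0::'b"] Lip0_zero by blast
  ultimately show ?thesis by simp
qed

lemma Lip0_add: "g \<in> Lip0 \<Longrightarrow> h \<in> Lip0 \<Longrightarrow> (\<lambda>x. g x + h x) \<in> Lip0"
  unfolding Lip0_def using lipschitz_on_add by fastforce

lemma Lip0_scale: "g \<in> Lip0 \<Longrightarrow> (\<lambda>x. c * (g x::real)) \<in> Lip0"
  unfolding Lip0_def using lipschitz_on_cmult_real by fastforce

lemma delta_Lip0: "g \<in> Lip0 \<Longrightarrow> \<delta> x g = g x"
  by (simp add: evalf_def)

lemma mcshane:
  fixes h :: "'a::real_normed_vector \<Rightarrow> real"
  assumes P: "finite P" "P \<noteq> {}" and K: "0 \<le> K"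
    and hl: "\<And>x x'. x \<in> P \<Longrightarrow> x' \<in> P \<Longrightarrow> h x - h x' \<le> K * norm (x - x')"
  defines "g \<equiv> \<lambda>x. Min ((\<lambda>s. h s + K * norm (x - s)) ` P)"
  shows "\<And>p. p \<in> P \<Longrightarrow> g p = h p" "\<And>x y. norm (g x - g y) \<le> K * norm (x - y)"
proof -
  have fin: "finite ((\<lambda>s. h s + K * norm (x - s)) ` P)" "((\<lambda>s. h s + K * norm (x - s)) ` P) \<noteq> {}" for x
    using P by auto
  have le: "g x \<le> h s + K * norm (x - s)" if "s \<in> P" for x s
    unfolding g_def using fin that by (intro Min_le) auto
  have ex: "\<exists>s\<in>P. g x = h s + K * norm (x - s)" for x
  proof -
    have "g x \<in> (\<lambda>s. h s + K * norm (x - s)) ` P" unfolding g_def using Min_in[OF fin] by blast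
    thus ?thesis by blast
  qed
  show "g p = h p" if p: "p \<in> P" for p
  proof -
    have "g p \<le> h p" using le[OF p, of p] by simp
    moreover obtain s where s: "s \<in> P" "g p = h s + K * norm (p - s)" using ex by blast
    moreover have "h p - h s \<le> K * norm (p - s)" using hl[OF p s(1)] .
    ultimately show ?thesis by linarith
  qed
  have one: "g x - g y \<le> K * norm (x - y)" for x y
  proof -
    obtain s where s: "s \<in> P" "g y = h s + K * norm (y - s)" using ex by blast
    have "norm (x - s) \<le> norm (x - y) + norm (y - s)" using norm_triangle_ineq[of "x - y" "y - s"] by simp
    hence "K * norm (x - s) \<le> K * norm (x - y) + K * norm (y - s)" using K
      by (metis distrib_left mult_left_mono)
    thus ?thesis using le[OF s(1), of x] s(2) by linarith
  qed
  show "norm (g x - g y) \<le> K * norm (x - y)" for x y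
    using one[of x y] one[of y x] by (simp add: norm_minus_commute abs_le_iff)
qed

lemma dspan_bdd:
  assumes "\<psi> = (\<lambda>g. \<Sum>x\<in>S. c x * \<delta> x g)"
  shows "bdd_above {\<bar>\<psi> g\<bar> | g. g \<in> Lip0 \<and> lipnorm g \<le> 1}"
proof -
  have "\<bar>\<psi> g\<bar> \<le> (\<Sum>x\<in>S. \<bar>c x\<bar> * norm x)" if g: "g \<in> Lip0" "lipnorm g \<le> 1" for g
  proof -
    have "\<bar>\<psi> g\<bar> \<le> (\<Sum>x\<in>S. \<bar>c x * \<delta> x g\<bar>)" unfolding assms by (rule sum_abs)
    also have "\<dots> \<le> (\<Sum>x\<in>S. \<bar>c x\<bar> * norm x)"
    proof (rule sum_mono)
      fix x
      have "\<bar>g x\<bar> \<le> lipnorm g * norm x" using lip_bound0[OF g(1), of x] by simp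
      also have "\<dots> \<le> norm x" using mult_right_mono[OF g(2) norm_ge_zero, of x] by simp
      finally show "\<bar>c x * \<delta> x g\<bar> \<le> \<bar>c x\<bar> * norm x"
        using g(1) by (simp add: delta_Lip0 abs_mult mult_left_mono)
    qed
    finally show ?thesis .
  qed
  thus ?thesis unfolding bdd_above_def by blast
qed

lemma key_mcshane:
  fixes h :: "'a::real_normed_vector \<Rightarrow> real"
  assumes nt: "\<exists>a::'a. a \<noteq> 0" and S: "finite S" and K: "0 \<le> K" and h0: "h 0 = 0"
    and hl: "\<And>x x'. x \<in> insert 0 S \<Longrightarrow> x' \<in> insert 0 S \<Longrightarrow> h x - h x' \<le> K * norm (x - x')"
  shows "(\<Sum>x\<in>S. c x * h x) \<le> K * dnorm (\<lambda>g. \<Sum>x\<in>S. c x * \<delta> x g)"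
proof -
  define \<psi> where "\<psi> = (\<lambda>g. \<Sum>x\<in>S. c x * \<delta> x g)"
  define g where "g = (\<lambda>x. Min ((\<lambda>s. h s + K * norm (x - s)) ` insert 0 S))"
  have gP: "\<And>p. p \<in> insert 0 S \<Longrightarrow> g p = h p" and gl: "\<And>x y. norm (g x - g y) \<le> K * norm (x - y)"
    using mcshane[of "insert 0 S" K h] S K hl unfolding g_def by auto
  have g0: "g 0 = 0" using gP[of 0] h0 by simp
  have sumeq: "(\<Sum>x\<in>S. c x * h x) = (\<Sum>x\<in>S. c x * g x)" using gP by simp
  show ?thesis
  proof (cases "K = 0")
    case True
    have "g x = 0" for x using gl[of x 0] g0 True by simp
    then show ?thesis using sumeq True by simp
  next
    case False
    hence Kp: "K > 0" using K by simp
    define g' where "g' = (\<lambda>x. (1/K) * g x)"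
    have g'L: "g' \<in> Lip0"
    proof (rule Lip0_I[of _ 1])
      show "g' 0 = 0" using g0 g'_def by simp
      fix x y
      have "norm (g' x - g' y) = (1/K) * norm (g x - g y)" unfolding g'_def using Kp
        by (simp add: diff_divide_distrib[symmetric] abs_divide)
      also have "\<dots> \<le> (1/K) * (K * norm (x - y))" using gl[of x y] Kp by (intro mult_left_mono) auto
      finally show "norm (g' x - g' y) \<le> 1 * norm (x - y)" using Kp by simp
    qed simp
    have g'n: "lipnorm g' \<le> 1"
    proof (rule lipnorm_le[OF nt])
      fix x y :: 'a
      have "norm (g' x - g' y) = (1/K) * norm (g x - g y)" unfolding g'_def using Kp
        by (simp add: diff_divide_distrib[symmetric] abs_divide)
      also have "\<dots> \<le> (1/K) * (K * norm (x - y))" using gl[of x y] Kp by (intro mult_left_mono) auto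
      finally show "norm (g' x - g' y) \<le> 1 * norm (x - y)" using Kp by simp
    qed
    have "\<psi> g' = (1/K) * (\<Sum>x\<in>S. c x * g x)"
      unfolding \<psi>_def using g'L by (simp add: delta_Lip0 g'_def sum_distrib_left algebra_simps)
    moreover have "\<bar>\<psi> g'\<bar> \<le> dnorm \<psi>"
      unfolding dnorm_def using g'L g'n by (intro cSup_upper[OF _ dspan_bdd[OF \<psi>_def]]) blast
    ultimately have "(1/K) * (\<Sum>x\<in>S. c x * g x) \<le> dnorm \<psi>" by (metis abs_ge_self order_trans)
    hence "(\<Sum>x\<in>S. c x * g x) \<le> K * dnorm \<psi>" using Kp by (simp add: pos_divide_le_eq mult.commute)
    thus ?thesis using Kp sumeq \<psi>_def by simp
  qed
qed


definition dsp :: "'a set \<Rightarrow> ('a \<Rightarrow> real) \<Rightarrow> ('a::real_normed_vector \<Rightarrow> real) \<Rightarrow> real" where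
  "dsp S c = (\<lambda>g. \<Sum>x\<in>S. c x * \<delta> x g)"

lemma dsp_in_span: "finite S \<Longrightarrow> dsp S c \<in> delta_span TYPE('a::real_normed_vector)"
  unfolding dsp_def delta_span_def by blast

lemma delta_spanE:
  assumes "\<psi> \<in> delta_span TYPE('a::real_normed_vector)"
  obtains S c where "finite S" "\<psi> = dsp S c"
  using assms unfolding delta_span_def dsp_def by blast

lemma dsp_lip_dual:
  "dsp S c \<in> lip_dual TYPE('a::real_normed_vector)"
  unfolding lip_dual_def
proof (intro CollectI conjI ballI allI impI)
  fix g :: "'a \<Rightarrow> real" assume "g \<notin> Lip0" thus "dsp S c g = 0" by (simp add: dsp_def evalf_def)
next
  fix g h :: "'a \<Rightarrow> real" assume g: "g \<in> Lip0" and h: "h \<in> Lip0"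
  have gh: "(\<lambda>x. g x + h x) \<in> Lip0" using Lip0_add[OF g h] .
  show "dsp S c (\<lambda>x. g x + h x) = dsp S c g + dsp S c h"
    unfolding dsp_def using g h gh by (simp add: delta_Lip0 sum.distrib distrib_left)
next
  fix g :: "'a \<Rightarrow> real" and r assume g: "g \<in> Lip0"
  have gr: "(\<lambda>x. r * g x) \<in> Lip0" using Lip0_scale[OF g] .
  show "dsp S c (\<lambda>x. r * g x) = r * dsp S c g"
    unfolding dsp_def using g gr by (simp add: delta_Lip0 sum_distrib_left algebra_simps)
next
  show "\<exists>C. \<forall>g\<in>Lip0. \<bar>dsp S c g\<bar> \<le> C * lipnorm g"
  proof (intro exI ballI)
    fix g :: "'a \<Rightarrow> real" assume g: "g \<in> Lip0"
    have "\<bar>dsp S c g\<bar> \<le> (\<Sum>x\<in>S. \<bar>c x * \<delta> x g\<bar>)" unfolding dsp_def by (rule sum_abs)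
    also have "\<dots> \<le> (\<Sum>x\<in>S. \<bar>c x\<bar> * norm x * lipnorm g)"
    proof (rule sum_mono)
      fix x
      have "\<bar>g x\<bar> \<le> lipnorm g * norm x" using lip_bound0[OF g, of x] by simp
      hence "\<bar>c x\<bar> * \<bar>g x\<bar> \<le> \<bar>c x\<bar> * (lipnorm g * norm x)" by (rule mult_left_mono) auto
      thus "\<bar>c x * \<delta> x g\<bar> \<le> \<bar>c x\<bar> * norm x * lipnorm g"
        using g by (simp add: delta_Lip0 abs_mult mult_ac)
    qed
    also have "\<dots> = (\<Sum>x\<in>S. \<bar>c x\<bar> * norm x) * lipnorm g" by (simp add: sum_distrib_right)
    finally show "\<bar>dsp S c g\<bar> \<le> (\<Sum>x\<in>S. \<bar>c x\<bar> * norm x) * lipnorm g" .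
  qed
qed

lemma lip_dual_bound:
  assumes "\<phi> \<in> lip_dual TYPE('a::real_normed_vector)"
  obtains C where "\<And>g. g \<in> Lip0 \<Longrightarrow> \<bar>\<phi> g\<bar> \<le> C * lipnorm (g :: 'a \<Rightarrow> real)"
  using assms unfolding lip_dual_def by blast

lemma lip_dual_zero:
  assumes "\<phi> \<in> lip_dual TYPE('a::real_normed_vector)"
  shows "\<phi> (\<lambda>x::'a. 0) = 0"
proof -
  have H: "\<forall>g\<in>Lip0. \<forall>c. \<phi> (\<lambda>x::'a. c * g x) = c * \<phi> g" using assms unfolding lip_dual_def by blast
  have "\<phi> (\<lambda>x::'a. 0 * (0::real)) = 0 * \<phi> (\<lambda>x. 0)" using H[rule_format, OF Lip0_zero_real, of 0] .
  thus ?thesis by simp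
qed

lemma lip_dual_bdd:
  assumes nt: "\<exists>a::'a. a \<noteq> 0" and "\<phi> \<in> lip_dual TYPE('a::real_normed_vector)"
  shows "bdd_above {\<bar>\<phi> g\<bar> | g. g \<in> Lip0 \<and> lipnorm (g :: 'a \<Rightarrow> real) \<le> 1}"
proof -
  obtain C where C: "\<And>g. g \<in> Lip0 \<Longrightarrow> \<bar>\<phi> g\<bar> \<le> C * lipnorm (g :: 'a \<Rightarrow> real)"
    using lip_dual_bound[OF assms(2)] by blast
  have "\<bar>\<phi> g\<bar> \<le> max C 0" if "g \<in> Lip0" "lipnorm g \<le> 1" for g
  proof -
    have "0 \<le> lipnorm g" using lipnorm_nonneg[OF nt that(1)] .
    hence "C * lipnorm g \<le> max C 0"
    proof (cases "C \<ge> 0")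
      case True
      hence "C * lipnorm g \<le> C * 1" using that(2) by (intro mult_left_mono) auto
      thus ?thesis by simp
    next
      case False
      hence "C * lipnorm g \<le> 0" using \<open>0 \<le> lipnorm g\<close> by (simp add: mult_nonpos_nonneg)
      thus ?thesis by simp
    qed
    thus ?thesis using C[OF that(1)] by linarith
  qed
  thus ?thesis unfolding bdd_above_def by blast
qed

lemma dnorm_upper:
  assumes nt: "\<exists>a::'a. a \<noteq> 0" and "\<phi> \<in> lip_dual TYPE('a::real_normed_vector)"
    and "g \<in> Lip0" "lipnorm (g :: 'a \<Rightarrow> real) \<le> 1"
  shows "\<bar>\<phi> g\<bar> \<le> dnorm \<phi>"
  unfolding dnorm_def using assms(3,4) by (intro cSup_upper[OF _ lip_dual_bdd[OF assms(1,2)]]) blast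

lemma dnorm_nonneg:
  assumes nt: "\<exists>a::'a. a \<noteq> 0" and "\<phi> \<in> lip_dual TYPE('a::real_normed_vector)"
  shows "0 \<le> dnorm \<phi>"
proof -
  have "lipnorm (\<lambda>x::'a. 0::real) = 0" using lipnorm_zero[OF nt] .
  hence "\<bar>\<phi> (\<lambda>x::'a. 0::real)\<bar> \<le> dnorm \<phi>" using dnorm_upper[OF assms Lip0_zero_real] by simp
  thus ?thesis using lip_dual_zero[OF assms(2)] by simp
qed

lemma dnorm_least:
  assumes nt: "\<exists>a::'a. a \<noteq> 0"
    and "\<And>g. g \<in> Lip0 \<Longrightarrow> lipnorm (g :: 'a \<Rightarrow> real) \<le> 1 \<Longrightarrow> \<bar>\<phi> g\<bar> \<le> B"
  shows "dnorm (\<phi> :: ('a::real_normed_vector \<Rightarrow> real) \<Rightarrow> real) \<le> B"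
  unfolding dnorm_def
proof (rule cSup_least)
  show "{\<bar>\<phi> g\<bar> |g. g \<in> Lip0 \<and> lipnorm g \<le> 1} \<noteq> {}"
  proof -
    have "lipnorm (\<lambda>x::'a. 0::real) = 0" using lipnorm_zero[OF nt] .
    thus ?thesis using Lip0_zero_real by fastforce
  qed
qed (use assms(2) in blast)

lemma lip_dual_diff:
  assumes "\<phi> \<in> lip_dual TYPE('a::real_normed_vector)" "\<psi> \<in> lip_dual TYPE('a)"
  shows "(\<lambda>g. \<phi> g - \<psi> g) \<in> lip_dual TYPE('a)"
proof -
  obtain C1 where C1: "\<And>g. g \<in> Lip0 \<Longrightarrow> \<bar>\<phi> g\<bar> \<le> C1 * lipnorm (g :: 'a \<Rightarrow> real)"
    using lip_dual_bound[OF assms(1)] by blast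
  obtain C2 where C2: "\<And>g. g \<in> Lip0 \<Longrightarrow> \<bar>\<psi> g\<bar> \<le> C2 * lipnorm (g :: 'a \<Rightarrow> real)"
    using lip_dual_bound[OF assms(2)] by blast
  show ?thesis using assms unfolding lip_dual_def
  proof (intro CollectI conjI ballI allI impI)
    show "\<exists>C. \<forall>g\<in>Lip0. \<bar>\<phi> g - \<psi> g\<bar> \<le> C * lipnorm g"
    proof (intro exI ballI)
      fix g :: "'a \<Rightarrow> real" assume g: "g \<in> Lip0"
      show "\<bar>\<phi> g - \<psi> g\<bar> \<le> (C1 + C2) * lipnorm g" using C1[OF g] C2[OF g] by (simp add: distrib_right)
    qed
  qed (auto simp: algebra_simps)
qed

lemma dsp_diff:
  assumes "finite S1" "finite S2"
  shows "\<exists>S c. finite S \<and> (\<lambda>g. dsp S1 c1 g - dsp S2 c2 g) = dsp S c"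
proof (intro exI conjI)
  show "finite (S1 \<union> S2)" using assms by simp
  have e1: "(\<Sum>x\<in>S1 \<union> S2. (if x \<in> S1 then c1 x else 0) * \<delta> x g) = (\<Sum>x\<in>S1. c1 x * \<delta> x g)" for g
    using assms by (intro sum.mono_neutral_cong_right) auto
  have e2: "(\<Sum>x\<in>S1 \<union> S2. (if x \<in> S2 then c2 x else 0) * \<delta> x g) = (\<Sum>x\<in>S2. c2 x * \<delta> x g)" for g
    using assms by (intro sum.mono_neutral_cong_right) auto
  show "(\<lambda>g. dsp S1 c1 g - dsp S2 c2 g) = dsp (S1 \<union> S2) (\<lambda>x. (if x \<in> S1 then c1 x else 0) - (if x \<in> S2 then c2 x else 0))"
    unfolding dsp_def by (rule ext) (simp add: left_diff_distrib sum_subtractf e1 e2)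
qed

lemma dnorm_zero:
  assumes nt: "\<exists>a::'a. a \<noteq> 0"
  shows "dnorm (\<lambda>g::'a::real_normed_vector \<Rightarrow> real. 0) = 0"
  using dnorm_least[OF nt, of "\<lambda>g. 0" 0] dnorm_nonneg[OF nt dsp_lip_dual[of "{}" "\<lambda>_. 0"]]
  by (simp add: dsp_def)

lemma dsp_free:
  assumes nt: "\<exists>a::'a. a \<noteq> 0" and "finite S"
  shows "dsp S c \<in> free_space TYPE('a::real_normed_vector)"
proof -
  have "\<forall>e>0. \<exists>\<psi>\<in>delta_span TYPE('a). dnorm (\<lambda>g. dsp S c g - \<psi> g) < e"
    using dsp_in_span[OF assms(2), of c] dnorm_zero[OF nt] by (intro allI impI bexI[of _ "dsp S c"]) auto
  thus ?thesis unfolding free_space_def using dsp_lip_dual by blast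
qed

lemma free_diff:
  assumes nt: "\<exists>a::'a. a \<noteq> 0" and w: "w \<in> free_space TYPE('a::real_normed_vector)" and S: "finite S"
  shows "(\<lambda>g. w g - dsp S c g) \<in> free_space TYPE('a)"
  unfolding free_space_def
proof (intro CollectI conjI allI impI)
  show "(\<lambda>g. w g - dsp S c g) \<in> lip_dual TYPE('a)"
    using w dsp_lip_dual unfolding free_space_def by (intro lip_dual_diff) auto
  fix e :: real assume e: "e > 0"
  then obtain \<psi> where \<psi>: "\<psi> \<in> delta_span TYPE('a)" "dnorm (\<lambda>g. w g - \<psi> g) < e"
    using w unfolding free_space_def by blast
  obtain S' c' where S': "finite S'" "\<psi> = dsp S' c'" using \<psi>(1) delta_spanE by blast
  obtain S'' c'' where S'': "finite S''" "(\<lambda>g. dsp S' c' g - dsp S c g) = dsp S'' c''"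
    using dsp_diff[OF S'(1) S] by blast
  have "(\<lambda>g. (w g - dsp S c g) - dsp S'' c'' g) = (\<lambda>g. w g - \<psi> g)"
  proof -
    have h: "dsp S'' c'' g = dsp S' c' g - dsp S c g" for g using S''(2) by (metis (no_types))
    show ?thesis using S'(2) by (simp add: fun_eq_iff h)
  qed
  thus "\<exists>\<psi>\<in>delta_span TYPE('a). dnorm (\<lambda>g. w g - dsp S c g - \<psi> g) < e"
    using \<psi>(2) dsp_in_span[OF S''(1)] by (intro bexI[of _ "dsp S'' c''"]) auto
qed

lemma T_zero:
  assumes nt: "\<exists>a::'a. a \<noteq> 0" and T: "is_linearization (f :: 'a::real_normed_vector \<Rightarrow> 'b::real_normed_vector) T"
  shows "T (\<lambda>g. 0) = 0"
proof -
  have z: "(\<lambda>g. 0) \<in> free_space TYPE('a)" using dsp_free[OF nt, of "{}" "\<lambda>_. 0"] by (simp add: dsp_def)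
  have H: "\<forall>\<phi>\<in>free_space TYPE('a). \<forall>c. T (\<lambda>g. c * \<phi> g) = c *\<^sub>R T \<phi>" using T unfolding is_linearization_def by blast
  have "T (\<lambda>g. 0 * (\<lambda>g. 0) g) = 0 *\<^sub>R T (\<lambda>g. 0)" using H[rule_format, OF z, of 0] .
  thus ?thesis by simp
qed

lemma T_dsp:
  assumes nt: "\<exists>a::'a. a \<noteq> 0" and T: "is_linearization (f :: 'a::real_normed_vector \<Rightarrow> 'b::real_normed_vector) T"
    and S: "finite S"
  shows "T (dsp S c) = (\<Sum>x\<in>S. c x *\<^sub>R f x)"
  using S
proof (induction S rule: finite_induct)
  case empty
  then show ?case using T_zero[OF nt T] by (simp add: dsp_def)
next
  case (insert a S)
  have add: "\<And>\<phi> \<psi>. \<phi> \<in> free_space TYPE('a) \<Longrightarrow> \<psi> \<in> free_space TYPE('a) \<Longrightarrow> T (\<lambda>g. \<phi> g + \<psi> g) = T \<phi> + T \<psi>"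
    and sc: "\<And>\<phi> r. \<phi> \<in> free_space TYPE('a) \<Longrightarrow> T (\<lambda>g. r * \<phi> g) = r *\<^sub>R T \<phi>"
    and dl: "\<And>x. T (\<delta> x) = f x"
    using T unfolding is_linearization_def by blast+
  have da: "\<delta> a = dsp {a} (\<lambda>_. 1)" by (simp add: dsp_def)
  have daf: "\<delta> a \<in> free_space TYPE('a)" using dsp_free[OF nt, of "{a}"] da by simp
  have cdaf: "(\<lambda>g. c a * \<delta> a g) \<in> free_space TYPE('a)" using dsp_free[OF nt, of "{a}" c] by (simp add: dsp_def)
  have e: "dsp (insert a S) c = (\<lambda>g. (\<lambda>g. c a * \<delta> a g) g + dsp S c g)"
    using insert by (simp add: dsp_def fun_eq_iff)
  have "T (dsp (insert a S) c) = T (\<lambda>g. c a * \<delta> a g) + T (dsp S c)"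
    unfolding e using add[OF cdaf dsp_free[OF nt insert(1)]] by simp
  also have "T (\<lambda>g. c a * \<delta> a g) = c a *\<^sub>R f a" using sc[OF daf] dl by simp
  finally show ?case using insert by simp
qed

lemma T_split:
  assumes T: "is_linearization f T" and "w \<in> free_space TYPE('a::real_normed_vector)"
    and "\<psi> \<in> free_space TYPE('a)" and "(\<lambda>g. w g - \<psi> g) \<in> free_space TYPE('a)"
  shows "T w = T (\<lambda>g. w g - \<psi> g) + T \<psi>"
proof -
  have H: "\<forall>\<phi>\<in>free_space TYPE('a). \<forall>\<psi>\<in>free_space TYPE('a). T (\<lambda>g. \<phi> g + \<psi> g) = T \<phi> + T \<psi>"
    using T unfolding is_linearization_def by blast
  have "T (\<lambda>g. (\<lambda>g. w g - \<psi> g) g + \<psi> g) = T (\<lambda>g. w g - \<psi> g) + T \<psi>"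
    using H[rule_format, OF assms(4,3)] .
  thus ?thesis by simp
qed


lemma uc_lemma:
  assumes uc: "uniformly_convex TYPE('b::real_normed_vector)" and L: "L > 0" and ep: "\<epsilon> > 0"
  shows "\<exists>dl>0. dl \<le> L \<and> (\<forall>d y::'b. norm y = L \<longrightarrow> norm d \<le> L \<longrightarrow> \<epsilon> \<le> norm (d - y) \<longrightarrow> norm (d + y) \<le> 2*L - dl)"
proof -
  have pos: "\<epsilon>/(2*L) > 0" using L ep by simp
  obtain e0 where e0pos: "e0 > 0" and H0: "\<forall>x y::'b. norm x = 1 \<and> norm y = 1 \<and> norm (x - y) \<ge> \<epsilon>/(2*L)
       \<longrightarrow> norm ((1/2) *\<^sub>R (x + y)) \<le> 1 - e0"
    using uc[unfolded uniformly_convex_def, rule_format, OF pos] by blast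
  have H: "norm ((1/2) *\<^sub>R (x + y)) \<le> 1 - e0" if "norm x = 1" "norm y = 1" "norm (x - y) \<ge> \<epsilon>/(2*L)" for x y :: 'b
    using H0 that by blast
  define dl where "dl = min (\<epsilon>/2) (min (L*e0) L)"
  have dp: "dl > 0" using ep L e0pos by (simp add: dl_def)
  have dL: "dl \<le> L" "dl \<le> L*e0" "dl \<le> \<epsilon>/2" by (simp_all add: dl_def)
  have main: "norm (d + y) \<le> 2*L - dl" if ny: "norm y = L" and nd: "norm d \<le> L" and far: "\<epsilon> \<le> norm (d - y)" for d y :: 'b
  proof (cases "norm d \<le> L - dl")
    case True
    then show ?thesis using norm_triangle_ineq[of d y] ny by linarith
  next
    case False
    hence ndp: "norm d > 0" using dL by linarith
    define d' where "d' = (L / norm d) *\<^sub>R d"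
    have nd': "norm d' = L" unfolding d'_def using ndp L by simp
    have "d' - d = ((L - norm d) / norm d) *\<^sub>R d" unfolding d'_def using ndp
      by (simp add: algebra_simps diff_divide_distrib)
    hence ndd: "norm (d' - d) = L - norm d" using ndp nd by simp
    have "norm (d - y) \<le> norm (d - d') + norm (d' - y)" using norm_triangle_ineq[of "d - d'" "d' - y"] by simp
    hence far': "norm (d' - y) \<ge> \<epsilon>/2" using ndd far dL False by (simp add: norm_minus_commute)
    define a where "a = (1/L) *\<^sub>R d'"
    define b where "b = (1/L) *\<^sub>R y"
    have na: "norm a = 1" unfolding a_def using nd' L by simp
    have nb: "norm b = 1" unfolding b_def using ny L by simp
    have "a - b = (1/L) *\<^sub>R (d' - y)" unfolding a_def b_def by (simp add: algebra_simps)
    hence "norm (a - b) = norm (d' - y) / L" using L by simp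
    moreover have "(\<epsilon>/2)/L \<le> norm (d' - y) / L" using far' L by (intro divide_right_mono) auto
    ultimately have "norm (a - b) \<ge> \<epsilon>/(2*L)" by simp
    hence "norm ((1/2) *\<^sub>R (a + b)) \<le> 1 - e0" using H na nb by blast
    moreover have "(1/2) *\<^sub>R (a + b) = (1/(2*L)) *\<^sub>R (d' + y)" unfolding a_def b_def by (simp add: algebra_simps)
    ultimately have "norm (d' + y) / (2*L) \<le> 1 - e0" using L by simp
    hence "norm (d' + y) \<le> (1 - e0) * (2*L)" using L by (simp add: divide_le_eq)
    hence "norm (d' + y) \<le> 2*L - 2*L*e0" by (simp add: algebra_simps)
    moreover have "norm (d + y) \<le> norm (d' + y) + norm (d - d')" using norm_triangle_ineq[of "d' + y" "d - d'"] by (simp add: add.commute)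
    ultimately show ?thesis using ndd dL False by (simp add: norm_minus_commute)
  qed
  show ?thesis using dp dL main by blast
qed


lemma trivial_case:
  assumes all0: "\<And>x::'a. x = 0" and w: "w \<in> free_space TYPE('a::real_normed_vector)" and dw: "dnorm w = 1"
  shows False
proof -
  have xy: "\<And>x y::'a. x = y" using all0 by metis
  have lz: "lipnorm g = Sup ({}::real set)" for g :: "'a \<Rightarrow> real"
  proof -
    have "{norm (g x - g y) / norm (x - y) | x y. x \<noteq> y} = {}" using xy by blast
    thus ?thesis unfolding lipnorm_def by simp
  qed
  have gz: "g = (\<lambda>x. 0)" if "g \<in> Lip0" for g :: "'a \<Rightarrow> real"
  proof
    fix x show "g x = 0" using that all0[of x] unfolding Lip0_def by auto
  qed
  have wl: "w \<in> lip_dual TYPE('a)" using w unfolding free_space_def by blast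
  show False
  proof (cases "Sup ({}::real set) \<le> 1")
    case True
    have "{\<bar>w g\<bar> | g. g \<in> Lip0 \<and> lipnorm g \<le> 1} = {\<bar>w (\<lambda>x::'a. 0)\<bar>}"
    proof (rule set_eqI, rule iffI)
      fix r assume "r \<in> {\<bar>w g\<bar> | g. g \<in> Lip0 \<and> lipnorm g \<le> 1}"
      then obtain g where g: "r = \<bar>w g\<bar>" "g \<in> Lip0" by blast
      have "g = (\<lambda>x. 0)" using gz[OF g(2)] .
      thus "r \<in> {\<bar>w (\<lambda>x::'a. 0)\<bar>}" using g(1) by simp
    next
      fix r assume "r \<in> {\<bar>w (\<lambda>x::'a. 0)\<bar>}"
      hence r: "r = \<bar>w (\<lambda>x::'a. 0)\<bar>" by simp
      have "lipnorm (\<lambda>x::'a. 0::real) \<le> 1" using lz True by simp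
      thus "r \<in> {\<bar>w g\<bar> | g. g \<in> Lip0 \<and> lipnorm g \<le> 1}" using r Lip0_zero_real by blast
    qed
    hence "dnorm w = 0" unfolding dnorm_def using lip_dual_zero[OF wl] by simp
    thus False using dw by simp
  next
    case False
    have dn: "dnorm \<phi> = Sup ({}::real set)" for \<phi> :: "('a \<Rightarrow> real) \<Rightarrow> real"
    proof -
      have E: "{\<bar>\<phi> g\<bar> | g. g \<in> Lip0 \<and> lipnorm g \<le> 1} = {}" using lz False by auto
      show ?thesis unfolding dnorm_def E by (rule refl)
    qed
    have "\<forall>e>0. \<exists>\<psi>\<in>delta_span TYPE('a). dnorm (\<lambda>g. w g - \<psi> g) < e" using w unfolding free_space_def by blast
    then obtain \<psi> where "dnorm (\<lambda>g. w g - \<psi> g) < 1" by (meson zero_less_one)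
    thus False using dn False by simp
  qed
qed

theorem proposition3p7:
  fixes f :: "'a::banach \<Rightarrow> 'b::banach"
    and T :: "(('a \<Rightarrow> real) \<Rightarrow> real) \<Rightarrow> 'b"
  assumes "uniformly_convex TYPE('b)"
    and "f \<in> Lip0"
    and "is_linearization f T"
    and "attains_norm_free T"
  shows "f \<in> classA"
proof -
  note uc = assms(1) and Lf = assms(2) and Tl = assms(3)
  obtain w where w: "w \<in> free_space TYPE('a)" "dnorm w = 1" "norm (T w) = opnorm_free T"
    using assms(4) unfolding attains_norm_free_def by blast
  show ?thesis
  proof (cases "\<exists>a::'a. a \<noteq> 0")
    case False
    hence "\<And>x::'a. x = 0" by blast
    then show ?thesis using trivial_case w by blast
  next
    case True
    note nt = True
    define L where "L = lipnorm f"
    define y where "y = T w"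
    define dq where "dq x x' = (1 / norm (x - x')) *\<^sub>R (f x - f x')" for x x'
    have f0: "f 0 = 0" using Lf unfolding Lip0_def by blast
    have L0: "0 \<le> L" unfolding L_def using lipnorm_nonneg[OF nt Lf] .
    have dqL: "norm (dq x x') \<le> L" if "x \<noteq> x'" for x x'
    proof -
      have "norm (dq x x') = norm (f x - f x') / norm (x - x')" unfolding dq_def by simp
      also have "\<dots> \<le> L" using lip_bound[OF Lf, of x x'] that unfolding L_def
        by (simp add: divide_le_eq)
      finally show ?thesis .
    qed
    obtain C where C: "\<forall>\<phi>\<in>free_space TYPE('a). norm (T \<phi>) \<le> C * dnorm \<phi>"
      using Tl unfolding is_linearization_def by blast
    define Cp where "Cp = max C 0 + 1"
    have Cpp: "Cp > 0" unfolding Cp_def by simp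
    have Cb: "norm (T \<phi>) \<le> Cp * dnorm \<phi>" if "\<phi> \<in> free_space TYPE('a)" for \<phi>
    proof -
      have "0 \<le> dnorm \<phi>" using dnorm_nonneg[OF nt] that unfolding free_space_def by blast
      hence "C * dnorm \<phi> \<le> Cp * dnorm \<phi>" unfolding Cp_def by (intro mult_right_mono) auto
      thus ?thesis using C that by fastforce
    qed
    have A: "\<exists>S c \<phi>. finite S \<and> lin_on (span (insert y (f ` S))) \<phi>
        \<and> (\<forall>a\<in>span (insert y (f ` S)). \<phi> a \<le> norm a) \<and> \<phi> y = norm y
        \<and> norm y - Cp * e \<le> (\<Sum>x\<in>S. c x * \<phi> (f x)) \<and> dnorm (dsp S c) \<le> 1 + e" if e: "e > 0" for e
    proof -
      obtain \<psi> where \<psi>: "\<psi> \<in> delta_span TYPE('a)" "dnorm (\<lambda>g. w g - \<psi> g) < e"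
        using w(1) e unfolding free_space_def by blast
      obtain S c where S: "finite S" "\<psi> = dsp S c" using \<psi>(1) delta_spanE by blast
      define D where "D = (\<lambda>g. w g - dsp S c g)"
      have Df: "D \<in> free_space TYPE('a)" unfolding D_def using free_diff[OF nt w(1) S(1)] .
      have Dn: "dnorm D < e" using \<psi>(2) S(2) D_def by simp
      have Tsplit: "T w = T D + T (dsp S c)"
        unfolding D_def using T_split[OF Tl w(1) dsp_free[OF nt S(1)]] Df D_def by simp
      have TD: "norm (T D) \<le> Cp * e"
      proof -
        have "Cp * dnorm D \<le> Cp * e" using Dn Cpp by (intro mult_left_mono) auto
        thus ?thesis using Cb[OF Df] by linarith
      qed
      have Tpsi: "T (dsp S c) = (\<Sum>x\<in>S. c x *\<^sub>R f x)" using T_dsp[OF nt Tl S(1)] .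
      obtain \<phi> where hb: "lin_on (span (insert y (f ` S))) \<phi>"
        "\<forall>a\<in>span (insert y (f ` S)). \<phi> a \<le> norm a" "\<phi> y = norm y"
        using hb_fin[of "f ` S" y] S(1) by blast
      have fV: "f x \<in> span (insert y (f ` S))" if "x \<in> S" for x using that by (intro span_base) auto
      have yV: "y \<in> span (insert y (f ` S))" by (intro span_base) auto
      have sumV: "(\<Sum>x\<in>S. c x *\<^sub>R f x) \<in> span (insert y (f ` S))" using fV by (intro span_sum span_scale) auto
      have TDe: "T D = y - (\<Sum>x\<in>S. c x *\<^sub>R f x)" using Tsplit Tpsi y_def by simp
      have TDV: "T D \<in> span (insert y (f ` S))" unfolding TDe using span_diff[OF yV sumV] .
      have "(\<Sum>x\<in>S. c x * \<phi> (f x)) = \<phi> (\<Sum>x\<in>S. c x *\<^sub>R f x)"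
        using lin_on_sum[OF hb(1) S(1), of f c] fV by simp
      also have "(\<Sum>x\<in>S. c x *\<^sub>R f x) = y - T D" using TDe by simp
      also have "\<phi> (y - T D) = \<phi> y - \<phi> (T D)" using lin_on_diff[OF hb(1)] yV TDV by blast
      finally have s1: "(\<Sum>x\<in>S. c x * \<phi> (f x)) = norm y - \<phi> (T D)" using hb(3) by simp
      have "\<phi> (T D) \<le> norm (T D)" using hb(2) TDV by blast
      hence s2: "norm y - Cp * e \<le> (\<Sum>x\<in>S. c x * \<phi> (f x))" using s1 TD by linarith
      have wl: "w \<in> lip_dual TYPE('a)" using w(1) unfolding free_space_def by blast
      have Dl: "D \<in> lip_dual TYPE('a)" using Df unfolding free_space_def by blast
      have "dnorm (dsp S c) \<le> dnorm w + dnorm D"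
      proof (rule dnorm_least[OF nt])
        fix g :: "'a \<Rightarrow> real" assume g: "g \<in> Lip0" "lipnorm g \<le> 1"
        have "dsp S c g = w g - D g" unfolding D_def by simp
        thus "\<bar>dsp S c g\<bar> \<le> dnorm w + dnorm D"
          using dnorm_upper[OF nt wl g] dnorm_upper[OF nt Dl g] by linarith
      qed
      hence "dnorm (dsp S c) \<le> 1 + e" using w(2) Dn by linarith
      thus ?thesis using S(1) hb s2 by blast
    qed
    have B: "(\<Sum>x\<in>S. c x * \<phi> (f x)) \<le> K * (1 + e)"
      if S: "finite S" and lin: "lin_on (span (insert y (f ` S))) \<phi>" and dn: "dnorm (dsp S c) \<le> 1 + e"
        and K: "0 \<le> K"
        and hl: "\<And>x x'. x \<in> insert 0 S \<Longrightarrow> x' \<in> insert 0 S \<Longrightarrow> \<phi> (f x) - \<phi> (f x') \<le> K * norm (x - x')"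
      for S c \<phi> e K
    proof -
      have h0: "\<phi> (f 0) = 0" using f0 lin_on_zero[OF lin] by simp
      have "(\<Sum>x\<in>S. c x * \<phi> (f x)) \<le> K * dnorm (\<lambda>g. \<Sum>x\<in>S. c x * \<delta> x g)"
        using key_mcshane[OF nt S K, of "\<lambda>x. \<phi> (f x)" c] h0 hl by blast
      also have "\<dots> \<le> K * (1 + e)" using dn K unfolding dsp_def by (intro mult_left_mono) auto
      finally show ?thesis .
    qed
    have fV0: "f x \<in> span (insert y (f ` S))" if "x \<in> insert 0 S" for x S
    proof (cases "x = 0")
      case True then show ?thesis using f0 span_zero by simp
    next
      case False then show ?thesis using that by (intro span_base) auto
    qed
    have yle: "norm y \<le> L"
    proof (rule ccontr)
      assume "\<not> norm y \<le> L"
      hence gt: "norm y - L > 0" by simp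
      define e where "e = (norm y - L) / (2 * (Cp + L))"
      have e: "e > 0" unfolding e_def using gt Cpp L0 by simp
      obtain S c \<phi> where S: "finite S" and lin: "lin_on (span (insert y (f ` S))) \<phi>"
        and dom: "\<forall>a\<in>span (insert y (f ` S)). \<phi> a \<le> norm a"
        and s2: "norm y - Cp * e \<le> (\<Sum>x\<in>S. c x * \<phi> (f x))" and dn: "dnorm (dsp S c) \<le> 1 + e"
        using A[OF e] by blast
      have hl: "\<phi> (f x) - \<phi> (f x') \<le> L * norm (x - x')" if "x \<in> insert 0 S" "x' \<in> insert 0 S" for x x'
      proof -
        have "\<phi> (f x) - \<phi> (f x') = \<phi> (f x - f x')" using lin_on_diff[OF lin fV0[OF that(1)] fV0[OF that(2)]] by simp
        also have "\<dots> \<le> norm (f x - f x')" using dom span_diff[OF fV0[OF that(1)] fV0[OF that(2)]] by blast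
        also have "\<dots> \<le> L * norm (x - x')" using lip_bound[OF Lf] L_def by simp
        finally show ?thesis .
      qed
      have "(\<Sum>x\<in>S. c x * \<phi> (f x)) \<le> L * (1 + e)" using B[OF S lin dn L0 hl] by blast
      hence "norm y - L \<le> (Cp + L) * e" using s2 by (simp add: algebra_simps)
      also have "(Cp + L) * e = (norm y - L) / 2" unfolding e_def using Cpp L0 by (simp add: field_simps)
      finally show False using gt by simp
    qed
    have yge: "L \<le> norm y"
    proof -
      define M where "M = opnorm_free T"
      have bdd: "bdd_above {norm (T \<phi>) | \<phi>. \<phi> \<in> free_space TYPE('a) \<and> dnorm \<phi> \<le> 1}"
      proof -
        have "norm (T \<phi>) \<le> Cp" if "\<phi> \<in> free_space TYPE('a)" "dnorm \<phi> \<le> 1" for \<phi>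
        proof -
          have "Cp * dnorm \<phi> \<le> Cp * 1" using that(2) Cpp by (intro mult_left_mono) auto
          thus ?thesis using Cb[OF that(1)] by simp
        qed
        thus ?thesis unfolding bdd_above_def by blast
      qed
      have mol: "norm (f a - f b) \<le> M * norm (a - b)" if ab: "a \<noteq> b" for a b
      proof -
        define n where "n = norm (a - b)"
        have np: "n > 0" using ab n_def by simp
        define c where "c = (\<lambda>x. if x = a then 1 / n else - (1 / n))"
        define m where "m = dsp {a, b} c"
        have mf: "m \<in> free_space TYPE('a)" unfolding m_def using dsp_free[OF nt] by simp
        have Tm: "T m = (1 / n) *\<^sub>R (f a - f b)"
          unfolding m_def using T_dsp[OF nt Tl, of "{a, b}" c] ab by (simp add: c_def algebra_simps)
        have mn: "dnorm m \<le> 1"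
        proof (rule dnorm_least[OF nt])
          fix g :: "'a \<Rightarrow> real" assume g: "g \<in> Lip0" "lipnorm g \<le> 1"
          have "m g = (g a - g b) / n" unfolding m_def dsp_def c_def using ab g(1)
            by (simp add: delta_Lip0 diff_divide_distrib)
          moreover have b1: "\<bar>g a - g b\<bar> \<le> lipnorm g * n" using lip_bound[OF g(1), of a b] n_def by simp
          moreover have b2: "lipnorm g * n \<le> 1 * n" using g(2) np by (intro mult_right_mono) auto
          ultimately have "\<bar>g a - g b\<bar> \<le> n" "m g = (g a - g b) / n" by linarith+
          thus "\<bar>m g\<bar> \<le> 1" using np by (simp add: abs_divide divide_le_eq)
        qed
        have "norm (T m) \<le> M" unfolding M_def opnorm_free_def using mf mn
          by (intro cSup_upper[OF _ bdd]) blast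
        hence "norm (f a - f b) / n \<le> M" using Tm np by simp
        thus ?thesis using np n_def by (simp add: divide_le_eq)
      qed
      have "L \<le> M" unfolding L_def using lipnorm_le[OF nt mol] .
      thus ?thesis using w(3) y_def M_def by simp
    qed
    have ny: "norm y = L" using yle yge by simp
    have approx: "\<exists>x x'. x \<noteq> x' \<and> norm (dq x x' - y) < \<epsilon>" if ep: "\<epsilon> > 0" for \<epsilon>
    proof (cases "L = 0")
      case True
      obtain a :: 'a where a: "a \<noteq> 0" using nt by blast
      have "norm (dq a 0) \<le> 0" using dqL[OF a] True by simp
      hence "dq a 0 = 0" by simp
      moreover have "y = 0" using ny True by simp
      ultimately show ?thesis using a ep by (intro exI[of _ a] exI[of _ 0]) simp
    next
      case False
      hence Lp: "L > 0" using L0 by simp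
      show ?thesis
      proof (rule ccontr)
        assume "\<not> ?thesis"
        hence far: "\<epsilon> \<le> norm (dq x x' - y)" if "x \<noteq> x'" for x x' using that by force
        obtain dl where dlp: "dl > 0" and dlL: "dl \<le> L"
          and H: "\<forall>d y'::'b. norm y' = L \<longrightarrow> norm d \<le> L \<longrightarrow> \<epsilon> \<le> norm (d - y') \<longrightarrow> norm (d + y') \<le> 2*L - dl"
          using uc_lemma[OF uc Lp ep] by blast
        define e where "e = dl / (2 * (Cp + L))"
        have e: "e > 0" unfolding e_def using dlp Cpp L0 by simp
        obtain S c \<phi> where S: "finite S" and lin: "lin_on (span (insert y (f ` S))) \<phi>"
          and dom: "\<forall>a\<in>span (insert y (f ` S)). \<phi> a \<le> norm a" and py: "\<phi> y = norm y"
          and s2: "norm y - Cp * e \<le> (\<Sum>x\<in>S. c x * \<phi> (f x))" and dn: "dnorm (dsp S c) \<le> 1 + e"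
          using A[OF e] by blast
        have K: "0 \<le> L - dl" using dlL by simp
        have hl: "\<phi> (f x) - \<phi> (f x') \<le> (L - dl) * norm (x - x')" if xs: "x \<in> insert 0 S" "x' \<in> insert 0 S" for x x'
        proof (cases "x = x'")
          case True then show ?thesis by simp
        next
          case False
          define n where "n = norm (x - x')"
          have np: "n > 0" using False n_def by simp
          have dV: "f x - f x' \<in> span (insert y (f ` S))" using span_diff[OF fV0[OF xs(1)] fV0[OF xs(2)]] .
          have dqV: "dq x x' \<in> span (insert y (f ` S))" unfolding dq_def using span_scale[OF dV] .
          have yV: "y \<in> span (insert y (f ` S))" by (intro span_base) auto
          have fe: "f x - f x' = n *\<^sub>R dq x x'" unfolding dq_def n_def using np n_def by simp
          have "\<phi> (dq x x') + \<phi> y = \<phi> (dq x x' + y)" using lin_on_add[OF lin dqV yV] by simp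
          also have "\<dots> \<le> norm (dq x x' + y)" using dom span_add[OF dqV yV] by blast
          also have "\<dots> \<le> 2*L - dl" using H ny dqL[OF False] far[OF False] by blast
          finally have "\<phi> (dq x x') \<le> L - dl" using py ny by simp
          hence "n * \<phi> (dq x x') \<le> n * (L - dl)" using np by (intro mult_left_mono) auto
          moreover have "\<phi> (f x) - \<phi> (f x') = n * \<phi> (dq x x')"
            using lin_on_diff[OF lin fV0[OF xs(1)] fV0[OF xs(2)]] fe lin_on_scale[OF lin dqV] by simp
          ultimately show ?thesis using n_def by (simp add: mult.commute)
        qed
        have "(\<Sum>x\<in>S. c x * \<phi> (f x)) \<le> (L - dl) * (1 + e)" using B[OF S lin dn K hl] by blast
        hence "L - Cp * e \<le> (L - dl) * (1 + e)" using s2 ny by simp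
        hence "dl \<le> (Cp + L - dl) * e" by (simp add: algebra_simps)
        also have "\<dots> \<le> (Cp + L) * e" using e dlp by (intro mult_right_mono) auto
        also have "(Cp + L) * e = dl / 2" unfolding e_def using Cpp L0 by (simp add: field_simps)
        finally show False using dlp by simp
      qed
    qed
    have "\<forall>n. \<exists>p. fst p \<noteq> snd p \<and> norm (dq (fst p) (snd p) - y) < 1 / real (Suc n)"
    proof
      fix n
      obtain x x' where "x \<noteq> x'" "norm (dq x x' - y) < 1 / real (Suc n)" using approx[of "1 / real (Suc n)"] by auto
      thus "\<exists>p. fst p \<noteq> snd p \<and> norm (dq (fst p) (snd p) - y) < 1 / real (Suc n)"
        by (intro exI[of _ "(x, x')"]) simp
    qed
    from choice[OF this] obtain P where P0: "\<forall>n. fst (P n) \<noteq> snd (P n) \<and> norm (dq (fst (P n)) (snd (P n)) - y) < 1 / real (Suc n)"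
      by blast
    have P: "fst (P n) \<noteq> snd (P n) \<and> norm (dq (fst (P n)) (snd (P n)) - y) < 1 / real (Suc n)" for n
      using P0 by blast
    define xs where "xs n = fst (P n)" for n
    define ys where "ys n = snd (P n)" for n
    have lim: "(\<lambda>n. (1 / norm (xs n - ys n)) *\<^sub>R (f (xs n) - f (ys n))) \<longlonglongrightarrow> y"
    proof (rule LIMSEQ_I)
      fix r :: real assume r: "r > 0"
      obtain N where N: "inverse (real (Suc N)) < r" using reals_Archimedean[OF r] by blast
      have "norm ((1 / norm (xs n - ys n)) *\<^sub>R (f (xs n) - f (ys n)) - y) < r" if "n \<ge> N" for n
      proof -
        have "norm ((1 / norm (xs n - ys n)) *\<^sub>R (f (xs n) - f (ys n)) - y) < 1 / real (Suc n)"
          using P[of n] unfolding xs_def ys_def dq_def by simp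
        also have "1 / real (Suc n) \<le> 1 / real (Suc N)" using that by (simp add: frac_le)
        also have "\<dots> < r" using N by (simp add: inverse_eq_divide)
        finally show ?thesis .
      qed
      thus "\<exists>no. \<forall>n\<ge>no. norm ((1 / norm (xs n - ys n)) *\<^sub>R (f (xs n) - f (ys n)) - y) < r" by blast
    qed
    have nq: "\<forall>n. xs n \<noteq> ys n" using P xs_def ys_def by simp
    have nyl: "norm y = lipnorm f" using ny L_def by simp
    show ?thesis unfolding classA_def
      by (intro CollectI conjI Lf exI[of _ y] exI[of _ xs] exI[of _ ys] nyl nq lim)
  qed
qed

end
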